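(* Let $p$ be an odd prime. In the group $H = \langle a,b : a[a^p,b],\ b^p\rangle$, the element $a$ is nontrivial.
   Context: Commutator convention: $[x,y]=x^{-1}y^{-1}xy$, so $[a^p,b]=a^{-p}b^{-1}a^pb$. *)

theory Defs
  imports "HOL-Computational_Algebra.Primes"
begin

(* A letter is (x, False) = generator x, or (x, True) = its inverse x^{-1}.
   Elements of the presented group are words modulo the congruence generated
   by free cancellation and deletion of relators (in any position). *)

type_synonym 'g letter = "'g \<times> bool"
type_synonym 'g word = "'g letter list"

definition inv_letter :: "'g letter \<Rightarrow> 'g letter" where
  "inv_letter l = (fst l, \<not> snd l)"

definition inv_word :: "'g word \<Rightarrow> 'g word" where
  "inv_word w = rev (map inv_letter w)"

definition gen :: "'g \<Rightarrow> 'g word" where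
  "gen x = [(x, False)]"

definition wpow :: "'g word \<Rightarrow> nat \<Rightarrow> 'g word" where
  "wpow w n = concat (replicate n w)"

(* commutator convention [x,y] = x^{-1} y^{-1} x y *)
definition wcomm :: "'g word \<Rightarrow> 'g word \<Rightarrow> 'g word" where
  "wcomm x y = inv_word x @ inv_word y @ x @ y"

inductive pres_eq :: "'g word set \<Rightarrow> 'g word \<Rightarrow> 'g word \<Rightarrow> bool" for R where
  refl: "pres_eq R u u"
| sym: "pres_eq R u v \<Longrightarrow> pres_eq R v u"
| trans: "pres_eq R u v \<Longrightarrow> pres_eq R v w \<Longrightarrow> pres_eq R u w"
| cancel: "pres_eq R (u @ [l, inv_letter l] @ v) (u @ v)"
| relator: "r \<in> R \<Longrightarrow> pres_eq R (u @ r @ v) (u @ v)"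

(* H = < a, b | a [a^p, b], b^p >, with a = generator 0, b = generator 1 *)
definition H_rels :: "nat \<Rightarrow> nat word set" where
  "H_rels p = { gen 0 @ wcomm (wpow (gen 0) p) (gen 1), wpow (gen 1) p }"

end

theory Submission
  imports Defs "HOL-Number_Theory.Cong"
begin

fun L :: "int \<Rightarrow> int \<Rightarrow> nat letter \<Rightarrow> int \<Rightarrow> int" where
  "L m m' (g, s) x = (if g = 0 then (if s then x - 1 else x + 1)
      else if g = 1 then (if s then m' * x else m * x) else x)"

fun ev :: "int \<Rightarrow> int \<Rightarrow> nat word \<Rightarrow> int \<Rightarrow> int" where
  "ev m m' [] x = x"
| "ev m m' (l # w) x = L m m' l (ev m m' w x)"

lemma ev_append: "ev m m' (u @ v) x = ev m m' u (ev m m' v x)"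
  by (induction u) auto

lemma L_cong: "[x = y] (mod n) \<Longrightarrow> [L m m' l x = L m m' l y] (mod n)"
  by (cases l) (auto intro: cong_add cong_diff cong_mult)

lemma ev_cong: "[x = y] (mod n) \<Longrightarrow> [ev m m' w x = ev m m' w y] (mod n)"
  by (induction w) (auto intro: L_cong)

lemma ev_rep: "ev m m' (replicate k l) x = (L m m' l ^^ k) x"
  by (induction k) auto

lemma pow_a: "(L m m' (0, False) ^^ k) x = x + int k"
  by (induction k) auto
lemma pow_ai: "(L m m' (0, True) ^^ k) x = x - int k"
  by (induction k) auto
lemma pow_b: "(L m m' (1, False) ^^ k) x = m ^ k * x"
  by (induction k) auto

lemma pow_b': "(L m m' (Suc 0, False) ^^ k) x = m ^ k * x"
  using pow_b by simp

lemma inv_rep: "inv_word (replicate k l) = replicate k (inv_letter l)"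
  by (simp add: inv_word_def)

lemma wpow_gen: "wpow (gen g) k = replicate k (g, False)"
  by (induction k) (auto simp: wpow_def gen_def)

lemma model:
  assumes mm: "[m * m' = 1] (mod n)"
    and mp: "[m ^ p = 1] (mod n)"
    and m'p: "[m' * int p = int p - 1] (mod n)"
    and "pres_eq (H_rels p) u v"
  shows "[ev m m' u x = ev m m' v x] (mod n)"
  using assms(4)
proof (induction arbitrary: x rule: pres_eq.induct)
  case (refl u) then show ?case by simp
next
  case (sym u v) then show ?case by (simp add: cong_sym)
next
  case (trans u v w) then show ?case by (meson cong_trans)
next
  case (cancel u l v)
  obtain g s where l: "l = (g, s)" by fastforce
  have "[L m m' l (L m m' (inv_letter l) y) = y] (mod n)" for y
  proof -
    have c: "[(m * m') * y = 1 * y] (mod n)" using mm by (rule cong_mult) simp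
    have "[m * (m' * y) = y] (mod n)" "[m' * (m * y) = y] (mod n)" using c by (simp_all add: ac_simps)
    then show ?thesis using l by (auto simp: inv_letter_def)
  qed
  then show ?case by (simp add: ev_append ev_cong)
next
  case (relator r u v)
  have "[ev m m' r y = y] (mod n)" for y
  proof -
    { assume r: "r = wpow (gen 1) p"
      have "ev m m' r y = m ^ p * y" using r by (simp add: wpow_gen ev_rep pow_b')
      moreover have "[m ^ p * y = 1 * y] (mod n)" using mp by (intro cong_mult) auto
      ultimately have ?thesis by simp }
    moreover
    { assume r: "r = gen 0 @ wcomm (wpow (gen 0) p) (gen 1)"
      have r': "r = [(0,False)] @ replicate p (0,True) @ [(1,True)] @ replicate p (0,False) @ [(1,False)]"
        using r unfolding wcomm_def wpow_gen inv_rep by (simp add: inv_letter_def gen_def inv_word_def)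
      have e: "ev m m' r y = m' * (m * y + int p) - int p + 1"
        unfolding r' ev_append ev_rep by (simp add: pow_a pow_ai)
      have "[m' * (m * y + int p) - int p + 1 = (m * m') * y + m' * int p - int p + 1] (mod n)"
        by (simp add: algebra_simps)
      also have "[(m * m') * y + m' * int p - int p + 1 = 1 * y + (int p - 1) - int p + 1] (mod n)"
        using mm m'p by (intro cong_add cong_diff cong_mult) auto
      finally have ?thesis using e by simp }
    ultimately show ?thesis using relator.hyps by (auto simp: H_rels_def)
  qed
  then show ?case by (simp add: ev_append ev_cong)
qed

theorem mainTheorem10:
  fixes p :: nat
  assumes "prime p" and "odd p"
  shows "\<not> pres_eq (H_rels p) (gen 0) []"
proof
  assume h: "pres_eq (H_rels p) (gen 0) []"
  have p2: "p \<ge> 2" using assms(1) prime_ge_2_nat by blast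
  define q :: int where "q = int p - 1"
  have q1: "q \<ge> 1" using p2 q_def by simp
  have pq: "int p = q + 1" using q_def by simp
  define n :: int where "n = (q + 1) ^ p - q ^ p"
  have n2: "n \<ge> 2"
  proof -
    define k where "k = p - 1"
    have k: "p = Suc k" "k \<ge> 1" using p2 k_def by auto
    have A: "(q + 1) ^ k \<ge> q ^ k" using q1 by (intro power_mono) auto
    have B: "(q + 1) ^ k \<ge> (q+1) ^ 1" using q1 k by (intro power_increasing) auto
    have e: "(q+1)^p = q*(q+1)^k + (q+1)^k" using k by (simp add: algebra_simps)
    have C: "q*(q+1)^k \<ge> q*q^k" using q1 A by (simp add: mult_left_mono)
    have "n = q*(q+1)^k + (q+1)^k - q*q^k" using e k by (simp add: n_def)
    moreover have "(q+1)^1 = q + 1" by simp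
    ultimately show ?thesis using B C q1 by linarith
  qed
  have cop: "coprime q n"
  proof -
    have "coprime q (q + 1)" by simp
    hence c1: "coprime q ((q + 1) ^ p)" by simp
    show ?thesis unfolding coprime_def
    proof (intro allI impI)
      fix d assume dq: "d dvd q" and dn: "d dvd n"
      have "d dvd q ^ p" using dvd_trans[OF dq dvd_power[of p q]] p2 by auto
      moreover have "(q+1)^p = n + q^p" by (simp add: n_def)
      ultimately have "d dvd (q + 1) ^ p" using dn by simp
      thus "is_unit d" using c1 dq coprime_common_divisor by blast
    qed
  qed
  obtain u where u: "[q * u = 1] (mod n)" using cong_solve_coprime_int[OF cop] by blast
  define m where "m = int p * u"
  define m' where "m' = m ^ (p - 1)"
  have mp: "[m ^ p = 1] (mod n)"
  proof -
    have "[(q+1) ^ p = q ^ p] (mod n)" unfolding n_def cong_iff_dvd_diff by simp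
    hence "[(q+1) ^ p * u ^ p = q ^ p * u ^ p] (mod n)" by (rule cong_mult) simp
    moreover have "[q ^ p * u ^ p = 1] (mod n)" using cong_pow[OF u, of p]
      by (simp add: power_mult_distrib)
    moreover have "m ^ p = (q+1) ^ p * u ^ p" by (simp add: m_def pq power_mult_distrib)
    ultimately show ?thesis by (metis cong_trans)
  qed
  have mmp: "m * m' = m ^ p" using p2 unfolding m'_def by (cases p) auto
  have mm: "[m * m' = 1] (mod n)" using mp mmp by simp
  have m'p: "[m' * int p = int p - 1] (mod n)"
  proof -
    have "[m' * int p * (q * u) = m' * int p * 1] (mod n)" by (rule cong_mult[OF _ u]) simp
    moreover have "m' * int p * (q * u) = q * (m * m')" by (simp add: m_def algebra_simps)
    ultimately have "[q * (m * m') = m' * int p] (mod n)" by simp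
    hence "[m' * int p = q * (m * m')] (mod n)" by (rule cong_sym)
    also have "[q * (m * m') = q * 1] (mod n)" by (rule cong_mult[OF _ mm]) simp
    finally show ?thesis using q_def by simp
  qed
  have "[ev m m' (gen 0) 0 = ev m m' [] 0] (mod n)" by (rule model[OF mm mp m'p h])
  hence "[1 = 0] (mod n)" by (simp add: gen_def)
  hence "n dvd 1" by (simp add: cong_iff_dvd_diff)
  hence "n \<le> 1" using zdvd_imp_le[of n 1] by simp
  with n2 show False by simp
qed

end
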